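(* Consider the multi-market oligopoly of equal capacity $\mathcal{G}$ described in the context, and suppose the functions $u_x$ ($x\in E$) and $c$ satisfy: each $u_x$ is concave and differentiable; $c$ is convex and differentiable; and at least one of the following holds: (a) all but at most one of the $u_x$ are strictly concave, or (b) $c$ is strictly convex. Then for every player $i\in N$ and every opponent aggregate $\mathbf{s}_{-i}\in S_{-i}=(n-1)\Delta^{m-1}$, the payoff $\mathbf{s}_i\mapsto u_i(\mathbf{s}_i;\mathbf{s}_{-i})$ is strictly concave on $\Delta^{m-1}$.
   Context: Let $N=\{1,\dots,n\}$ be a set of firms (players) and $E=\{1,\dots,m\}$ a set of markets. Let $\Delta^{m-1}=\{\mathbf{v}\in\mathbb{R}^m:\mathbf{v}\ge 0,\ \mathbf{v}^{T}\mathbf{1}=1\}$. Each firm $i$ chooses a strategy $\mathbf{s}_i=(s_{ix})_{x=1}^m\in S_i=\Delta^{m-1}$ (it allocates one unit of resource across markets). For each market $x$ let $u_x:\mathbb{R}_{\ge 0}\to\mathbb{R}_{\ge 0}$ with $u_x(0)=0$ (total revenue in market $x$), and let $p_x(t)=u_x(t)/t$ for $t>0$. Let $c:\Delta^{m-1}\to\mathbb{R}_{\ge 0}$ be a common cost function. For a strategy profile $\mathbf{S}=(\mathbf{s}_i)_{i=1}^n$ put $s_x=\sum_{i=1}^n s_{ix}$, $\mathbf{s}_{-i}=\sum_{j\ne i}\mathbf{s}_j$ (so $s_x=s_{ix}+s_{-ix}$). The payoff of player $i$ is $u_i(\mathbf{s}_i;\mathbf{s}_{-i})=\sum_{x=1}^m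 p_x(s_x)s_{ix}-c(\mathbf{s}_i)$ (a term with $s_x=0$ is taken to be $0$). The game is $\mathcal{G}=(N,S,(u_i)_{i=1}^n)$ with $S=\prod_{i=1}^n \Delta^{m-1}$. *)

theory Defs
  imports "HOL-Analysis.Analysis"
begin

definition strictly_convex_on :: "'a::real_vector set \<Rightarrow> ('a \<Rightarrow> real) \<Rightarrow> bool" where
  "strictly_convex_on S f \<longleftrightarrow> convex S \<and>
     (\<forall>x\<in>S. \<forall>y\<in>S. x \<noteq> y \<longrightarrow> (\<forall>t. 0 < t \<and> t < 1 \<longrightarrow>
        f ((1 - t) *\<^sub>R x + t *\<^sub>R y) < (1 - t) * f x + t * f y))"

definition strictly_concave_on :: "'a::real_vector set \<Rightarrow> ('a \<Rightarrow> real) \<Rightarrow> bool" where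
  "strictly_concave_on S f \<longleftrightarrow> strictly_convex_on S (\<lambda>x. - f x)"

text \<open>The standard simplex \<open>\<Delta>^{m-1}\<close> in \<open>\<real>^m\<close>, markets indexed by the finite type \<open>'m\<close>.\<close>
definition std_simplex :: "(real ^ 'm::finite) set" where
  "std_simplex = {v. (\<forall>x. 0 \<le> v $ x) \<and> (\<Sum>x\<in>UNIV. v $ x) = 1}"

definition scaled_simplex :: "real \<Rightarrow> (real ^ 'm::finite) set" where
  "scaled_simplex k = {v. (\<forall>x. 0 \<le> v $ x) \<and> (\<Sum>x\<in>UNIV. v $ x) = k}"

definition price :: "('m \<Rightarrow> real \<Rightarrow> real) \<Rightarrow> 'm \<Rightarrow> real \<Rightarrow> real" where
  "price u x t = u x t / t"

text \<open>Payoff \<open>u_i(s_i; s_{-i}) = \<Sum>_x p_x(s_x) s_{ix} - c(s_i)\<close>, with \<open>s_x = s_{ix} + s_{-ix}\<close>;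
  a term with \<open>s_x = 0\<close> is taken to be 0.\<close>
definition payoff :: "('m::finite \<Rightarrow> real \<Rightarrow> real) \<Rightarrow> (real ^ 'm \<Rightarrow> real)
      \<Rightarrow> real ^ 'm \<Rightarrow> real ^ 'm \<Rightarrow> real" where
  "payoff u c si sopp =
     (\<Sum>x\<in>UNIV. (if si $ x + sopp $ x = 0 then 0
                  else price u x (si $ x + sopp $ x) * si $ x)) - c si"

end

theory Submission
  imports Defs
begin

lemma tangent_concave:
  fixes g :: "real \<Rightarrow> real"
  assumes conc: "concave_on {0..} g" and diff: "g differentiable_on {0..}" and y: "y > 0"
  obtains b where "\<And>z. z \<ge> 0 \<Longrightarrow> g z \<le> g y + b * (z - y)"
proof -
  have "g differentiable (at y within {0..})" using diff y by (simp add: differentiable_on_def)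
  then obtain D where D: "(g has_real_derivative D) (at y within {0..})"
    using real_differentiable_def by blast
  have D': "((\<lambda>x. - g x) has_real_derivative - D) (at y within {0..})"
    using D by (rule DERIV_minus)
  have cv: "convex_on {0..} (\<lambda>x. - g x)" using conc by (simp add: concave_on_def)
  have "g z \<le> g y + D * (z - y)" if "z \<ge> 0" for z
  proof -
    have "- g z - (- g y) \<ge> (- D) * (z - y)"
      by (rule convex_on_imp_above_tangent[OF cv _ _ _ D']) (use y that in auto)
    then show ?thesis by (simp add: algebra_simps)
  qed
  then show ?thesis using that by blast
qed

lemma strict_tangent:
  fixes g :: "real \<Rightarrow> real"
  assumes conc: "concave_on {0..} g" and diff: "g differentiable_on {0..}" and y: "y > 0"
    and st: "strictly_concave_on {0..} g"
    and b: "\<And>z. z \<ge> 0 \<Longrightarrow> g z \<le> g y + b * (z - y)"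
    and z: "z \<ge> 0" "z \<noteq> y"
  shows "g z < g y + b * (z - y)"
proof -
  have "- g ((1 - 1/2) *\<^sub>R y + (1/2) *\<^sub>R z) < (1 - 1/2) * (- g y) + (1/2) * (- g z)"
  proof -
    have H: "\<forall>x\<in>{0::real..}. \<forall>w\<in>{0..}. x \<noteq> w \<longrightarrow> (\<forall>t. 0 < t \<and> t < 1 \<longrightarrow>
        - g ((1 - t) *\<^sub>R x + t *\<^sub>R w) < (1 - t) * (- g x) + t * (- g w))"
      using st unfolding strictly_concave_on_def strictly_convex_on_def by blast
    show ?thesis using H[rule_format, of y z "1/2"] y z by auto
  qed
  then have m: "g ((y + z)/2) > (g y + g z)/2" by (simp add: field_simps)
  have "g ((y + z)/2) \<le> g y + b * ((y+z)/2 - y)" using b[of "(y+z)/2"] y z by auto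
  with m show ?thesis by (simp add: field_simps)
qed

lemma inv_convex:
  fixes p q s :: real
  assumes p: "p > 0" and q: "q > 0" and s: "0 \<le> s" "s \<le> 1"
  shows "1 / ((1-s)*p + s*q) \<le> (1-s)/p + s/q"
proof -
  define r where "r = (1-s)*p + s*q"
  have r: "r > 0" unfolding r_def using p q s
    by (smt (verit, ccfv_SIG) mult_nonneg_nonneg mult_pos_pos)
  have eq: "((1-s)/p + s/q) * r - 1 = s*(1-s)*(p-q)^2/(p*q)"
    unfolding r_def using p q by (simp add: field_simps power2_eq_square)
  have "s*(1-s)*(p-q)^2/(p*q) \<ge> 0" using s p q by simp
  then have "((1-s)/p + s/q) * r \<ge> 1" using eq by linarith
  then show ?thesis using r unfolding r_def[symmetric] by (simp add: divide_le_eq mult.commute)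
qed

lemma phi_concave:
  fixes a t1 t2 s :: real
  assumes a: "a > 0" and t1: "t1 \<ge> 0" and t2: "t2 \<ge> 0" and s: "0 \<le> s" "s \<le> 1"
  shows "(1-s) * (t1/(t1+a)) + s * (t2/(t2+a)) \<le> ((1-s)*t1+s*t2) / (((1-s)*t1+s*t2) + a)"
proof -
  have e: "t/(t+a) = 1 - a * (1/(t+a))" if "t \<ge> 0" for t
    using that a by (simp add: field_simps)
  have r: "(1-s)*t1+s*t2 \<ge> 0" using s t1 t2 by simp
  have "1/((1-s)*(t1+a) + s*(t2+a)) \<le> (1-s)/(t1+a) + s/(t2+a)"
    using inv_convex[of "t1+a" "t2+a" s] a t1 t2 s by simp
  moreover have "(1-s)*(t1+a) + s*(t2+a) = ((1-s)*t1+s*t2) + a" by (simp add: algebra_simps)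
  ultimately have "a * (1/(((1-s)*t1+s*t2) + a)) \<le> a * ((1-s)/(t1+a) + s/(t2+a))"
    using a by (intro mult_left_mono) auto
  then show ?thesis unfolding e[OF t1] e[OF t2] e[OF r] by (simp add: algebra_simps)
qed

lemma term_concave:
  fixes g :: "real \<Rightarrow> real"
  assumes conc: "concave_on {0..} g" and diff: "g differentiable_on {0..}" and g0: "g 0 = 0"
    and a: "a \<ge> 0" and t1: "t1 \<ge> 0" and t2: "t2 \<ge> 0" and s: "0 \<le> s" "s \<le> 1"
  defines "F \<equiv> \<lambda>t. if t + a = 0 then 0 else g (t + a) / (t + a) * t"
  shows "(1-s) * F t1 + s * F t2 \<le> F ((1-s)*t1 + s*t2)"
    and "strictly_concave_on {0..} g \<Longrightarrow> t1 \<noteq> t2 \<Longrightarrow> 0 < s \<Longrightarrow> s < 1 \<Longrightarrow>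
           (1-s) * F t1 + s * F t2 < F ((1-s)*t1 + s*t2)"
proof -
  define t where "t = (1-s)*t1 + s*t2"
  have t: "t \<ge> 0" unfolding t_def using s t1 t2 by simp
  have part: "(1-s) * F t1 + s * F t2 \<le> F t \<and>
     (strictly_concave_on {0..} g \<longrightarrow> t1 \<noteq> t2 \<longrightarrow> 0 < s \<longrightarrow> s < 1 \<longrightarrow>
           (1-s) * F t1 + s * F t2 < F t)"
  proof (cases "a = 0")
    case True
    have Fg: "F x = g x" if "x \<ge> 0" for x
      using that g0 True unfolding F_def by auto
    have c1: "(1-s) * g t1 + s * g t2 \<le> g t"
      using concave_onD[OF conc, of s t1 t2] s t1 t2 unfolding t_def by (simp add: algebra_simps)
    have c2: "(1-s) * g t1 + s * g t2 < g t"
      if st: "strictly_concave_on {0..} g" and ne: "t1 \<noteq> t2" and "0 < s" "s < 1"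
    proof -
      have H: "\<forall>x\<in>{0::real..}. \<forall>w\<in>{0..}. x \<noteq> w \<longrightarrow> (\<forall>t. 0 < t \<and> t < 1 \<longrightarrow>
          - g ((1 - t) *\<^sub>R x + t *\<^sub>R w) < (1 - t) * (- g x) + t * (- g w))"
        using st unfolding strictly_concave_on_def strictly_convex_on_def by blast
      show ?thesis using H[rule_format, of t1 t2 s] that t1 t2 unfolding t_def by auto
    qed
    show ?thesis using c1 c2 Fg t1 t2 t by auto
  next
    case False
    then have a: "a > 0" using a by simp
    define y where "y = t + a"
    have y: "y > 0" unfolding y_def using t a by simp
    obtain b where b: "\<And>z. z \<ge> 0 \<Longrightarrow> g z \<le> g y + b * (z - y)"
      using tangent_concave[OF conc diff y] by blast
    define \<alpha> where "\<alpha> = g y - b * y"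
    have al: "\<alpha> \<ge> 0" using b[of 0] g0 unfolding \<alpha>_def by simp
    define L where "L = (\<lambda>x. \<alpha> * (x/(x+a)) + b * x)"
    have FL: "F x \<le> L x" if x: "x \<ge> 0" for x
    proof -
      have xa: "x + a > 0" using x a by simp
      have "g (x + a) \<le> \<alpha> + b * (x + a)" using b[of "x+a"] xa unfolding \<alpha>_def
        by (simp add: algebra_simps)
      then have "g (x + a) / (x + a) * x \<le> (\<alpha> + b * (x + a)) / (x + a) * x"
        using xa x by (intro mult_right_mono divide_right_mono) auto
      also have "\<dots> = L x" unfolding L_def using xa by (simp add: field_simps)
      finally show ?thesis unfolding F_def using xa by simp
    qed
    have FLs: "F x < L x" if x: "x > 0" and xt: "x \<noteq> t" and st: "strictly_concave_on {0..} g" for x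
    proof -
      have xa: "x + a > 0" using x a by simp
      have "g (x + a) < g y + b * ((x + a) - y)"
        by (rule strict_tangent[OF conc diff y st b]) (use xa xt y_def in auto)
      then have "g (x + a) < \<alpha> + b * (x + a)" unfolding \<alpha>_def
        by (simp add: algebra_simps)
      then have "g (x + a) / (x + a) * x < (\<alpha> + b * (x + a)) / (x + a) * x"
        using xa x by (intro mult_strict_right_mono divide_strict_right_mono) auto
      also have "\<dots> = L x" unfolding L_def using xa by (simp add: field_simps)
      finally show ?thesis unfolding F_def using xa by simp
    qed
    have Ft: "F t = L t" unfolding F_def L_def \<alpha>_def using y y_def by (simp add: field_simps)
    have Lc: "(1-s) * L t1 + s * L t2 \<le> L t"
    proof -
      have "\<alpha> * ((1-s) * (t1/(t1+a)) + s * (t2/(t2+a))) \<le> \<alpha> * (t/(t+a))"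
        using phi_concave[OF a t1 t2 s] al unfolding t_def by (intro mult_left_mono) auto
      then show ?thesis unfolding L_def t_def by (simp add: algebra_simps)
    qed
    have c1: "(1-s) * F t1 + s * F t2 \<le> (1-s) * L t1 + s * L t2"
      using FL[OF t1] FL[OF t2] s by (intro add_mono mult_left_mono) auto
    have c2: "(1-s) * F t1 + s * F t2 < (1-s) * L t1 + s * L t2"
      if st: "strictly_concave_on {0..} g" and ne: "t1 \<noteq> t2" and s0: "0 < s" and s1: "s < 1"
    proof -
      have n1: "t1 \<noteq> t"
      proof
        assume "t1 = t"
        moreover have "s * (t2 - t1) = t - t1" unfolding t_def by (simp add: algebra_simps)
        ultimately have "s * (t2 - t1) = 0" by simp
        then show False using s0 ne by auto
      qed
      have n2: "t2 \<noteq> t"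
      proof
        assume "t2 = t"
        moreover have "(1-s) * (t1 - t2) = t - t2" unfolding t_def by (simp add: algebra_simps)
        ultimately have "(1-s) * (t1 - t2) = 0" by simp
        then show False using s1 ne by simp
      qed
      show ?thesis
      proof (cases "t1 > 0")
        case True
        have "(1-s) * F t1 < (1-s) * L t1" using FLs[OF True n1 st] s1 by simp
        moreover have "s * F t2 \<le> s * L t2" using FL[OF t2] s by (intro mult_left_mono) auto
        ultimately show ?thesis by linarith
      next
        case False
        then have "t2 > 0" using t1 t2 ne by auto
        then have "s * F t2 < s * L t2" using FLs[OF _ n2 st] s0 by simp
        moreover have "(1-s) * F t1 \<le> (1-s) * L t1" using FL[OF t1] s by (intro mult_left_mono) auto
        ultimately show ?thesis by linarith
      qed
    qed
    show ?thesis using c1 c2 Lc Ft by fastforce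
  qed
  then show "(1-s) * F t1 + s * F t2 \<le> F ((1-s)*t1 + s*t2)" unfolding t_def by blast
  show "strictly_concave_on {0..} g \<Longrightarrow> t1 \<noteq> t2 \<Longrightarrow> 0 < s \<Longrightarrow> s < 1 \<Longrightarrow>
           (1-s) * F t1 + s * F t2 < F ((1-s)*t1 + s*t2)" using part unfolding t_def by blast
qed

theorem proposition1:
  fixes n :: nat
    and u :: "'m::finite \<Rightarrow> real \<Rightarrow> real"
    and c :: "real ^ 'm \<Rightarrow> real"
    and i :: nat
    and sopp :: "real ^ 'm"
  assumes u_nonneg: "\<And>x t. 0 \<le> t \<Longrightarrow> 0 \<le> u x t"
    and u_zero: "\<And>x. u x 0 = 0"
    and c_nonneg: "\<And>s. s \<in> std_simplex \<Longrightarrow> 0 \<le> c s"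
    and u_concave: "\<And>x. concave_on {0..} (u x)"
    and u_diff: "\<And>x. u x differentiable_on {0..}"
    and c_convex: "convex_on std_simplex c"
    and c_diff: "c differentiable_on std_simplex"
    and strictness: "card {x. \<not> strictly_concave_on {0..} (u x)} \<le> 1
                     \<or> strictly_convex_on std_simplex c"
    and i_player: "i \<in> {1..n}"
    and sopp_in: "sopp \<in> scaled_simplex (real n - 1)"
  shows "strictly_concave_on std_simplex (\<lambda>si. payoff u c si sopp)"
proof -
  have sopp0: "\<And>x. 0 \<le> sopp $ x" using sopp_in unfolding scaled_simplex_def by simp
  define G where "G = (\<lambda>x t. if t + sopp $ x = 0 then 0 else price u x (t + sopp $ x) * t)"
  have pay: "payoff u c si sopp = (\<Sum>x\<in>UNIV. G x (si $ x)) - c si" for si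
    unfolding payoff_def G_def by simp
  have Gp: "G x = (\<lambda>t. if t + sopp $ x = 0 then 0 else u x (t + sopp $ x) / (t + sopp $ x) * t)" for x
    unfolding G_def price_def by simp
  have cvx: "convex (std_simplex :: (real ^ 'm) set)"
    unfolding convex_def std_simplex_def
    by (auto simp: sum.distrib sum_distrib_left[symmetric])
  have main: "- payoff u c ((1 - t) *\<^sub>R v + t *\<^sub>R w) sopp
      < (1 - t) * (- payoff u c v sopp) + t * (- payoff u c w sopp)"
    if v: "v \<in> std_simplex" and w: "w \<in> std_simplex" and vw: "v \<noteq> w"
      and t0: "0 < t" and t1: "t < 1" for v w :: "real ^ 'm" and t :: real
  proof -
    define z where "z = (1 - t) *\<^sub>R v + t *\<^sub>R w"
    have zc: "z $ x = (1 - t) * v $ x + t * w $ x" for x unfolding z_def by simp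
    have v0: "\<And>x. 0 \<le> v $ x" and w0: "\<And>x. 0 \<le> w $ x" using v w unfolding std_simplex_def by auto
    have vs: "(\<Sum>x\<in>UNIV. v $ x) = 1" and ws: "(\<Sum>x\<in>UNIV. w $ x) = 1"
      using v w unfolding std_simplex_def by auto
    have trm: "(1 - t) * G x (v $ x) + t * G x (w $ x) \<le> G x (z $ x)" for x
      unfolding Gp zc
      by (rule term_concave(1)[OF u_concave u_diff u_zero sopp0 v0 w0]) (use t0 t1 in auto)
    have trms: "(1 - t) * G x (v $ x) + t * G x (w $ x) < G x (z $ x)"
      if "strictly_concave_on {0..} (u x)" "v $ x \<noteq> w $ x" for x
      unfolding Gp zc
      by (rule term_concave(2)[OF u_concave u_diff u_zero sopp0 v0 w0]) (use t0 t1 that in auto)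
    have sumeq: "(1 - t) * (\<Sum>x\<in>UNIV. G x (v $ x)) + t * (\<Sum>x\<in>UNIV. G x (w $ x))
        = (\<Sum>x\<in>UNIV. (1 - t) * G x (v $ x) + t * G x (w $ x))"
      by (simp add: sum.distrib sum_distrib_left)
    have S1: "(\<Sum>x\<in>UNIV. (1 - t) * G x (v $ x) + t * G x (w $ x)) \<le> (\<Sum>x\<in>UNIV. G x (z $ x))"
      by (rule sum_mono) (rule trm)
    have cz: "c z \<le> (1 - t) * c v + t * c w"
      using c_convex v w t0 t1 unfolding convex_on_def z_def by auto
    have strict: "(1 - t) * (\<Sum>x\<in>UNIV. G x (v $ x)) + t * (\<Sum>x\<in>UNIV. G x (w $ x)) - ((1 - t) * c v + t * c w)
        < (\<Sum>x\<in>UNIV. G x (z $ x)) - c z"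
    proof (cases "strictly_convex_on std_simplex c")
      case True
      have "c z < (1 - t) * c v + t * c w"
        using True v w vw t0 t1 unfolding strictly_convex_on_def z_def by auto
      then show ?thesis using S1 sumeq by linarith
    next
      case False
      then have card: "card {x. \<not> strictly_concave_on {0..} (u x)} \<le> 1" using strictness by simp
      obtain x1 where x1: "v $ x1 \<noteq> w $ x1" using vw by (auto simp: vec_eq_iff)
      have "\<exists>x2. x2 \<noteq> x1 \<and> v $ x2 \<noteq> w $ x2"
      proof (rule ccontr)
        assume "\<not> ?thesis"
        then have eq: "\<And>x. x \<noteq> x1 \<Longrightarrow> v $ x = w $ x" by blast
        have "(\<Sum>x\<in>UNIV. v $ x) = v $ x1 + (\<Sum>x\<in>UNIV - {x1}. v $ x)"
          by (simp add: sum.remove)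
        moreover have "(\<Sum>x\<in>UNIV. w $ x) = w $ x1 + (\<Sum>x\<in>UNIV - {x1}. w $ x)"
          by (simp add: sum.remove)
        moreover have "(\<Sum>x\<in>UNIV - {x1}. v $ x) = (\<Sum>x\<in>UNIV - {x1}. w $ x)"
          using eq by (intro sum.cong) auto
        ultimately show False using vs ws x1 by simp
      qed
      then obtain x2 where x2: "x2 \<noteq> x1" "v $ x2 \<noteq> w $ x2" by blast
      obtain xs where xs: "strictly_concave_on {0..} (u xs)" "v $ xs \<noteq> w $ xs"
      proof (cases "strictly_concave_on {0..} (u x1)")
        case True then show ?thesis using that x1 by blast
      next
        case False
        have "strictly_concave_on {0..} (u x2)"
        proof (rule ccontr)
          assume "\<not> ?thesis"
          then have "{x1, x2} \<subseteq> {x. \<not> strictly_concave_on {0..} (u x)}" using False by auto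
          then have "card {x1, x2} \<le> card {x. \<not> strictly_concave_on {0..} (u x)}"
            by (intro card_mono) auto
          then show False using card x2(1) by simp
        qed
        then show ?thesis using that x2 by blast
      qed
      have "(\<Sum>x\<in>UNIV. (1 - t) * G x (v $ x) + t * G x (w $ x)) < (\<Sum>x\<in>UNIV. G x (z $ x))"
        by (rule sum_strict_mono_ex1) (use trm trms xs in auto)
      then show ?thesis using sumeq cz by linarith
    qed
    show ?thesis unfolding pay z_def[symmetric] using strict by (simp add: algebra_simps)
  qed
  show ?thesis
    unfolding strictly_concave_on_def strictly_convex_on_def
    using cvx main by blast
qed

end
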